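(* Consider the network with vertices $s_1,s_2,s_3,t$ and directed edges $(s_3,s_1),(s_3,s_2),(s_1,t),(s_2,t)$, where $\mathcal{A}=\mathcal{Z}=\{0,1\}$, the messages $X_1^k,X_2^k,X_3^k$ have all components i.i.d. uniform on $\{0,1\}$, and the demand function is the arithmetic sum $f(X_1,X_2,X_3)=X_1+X_2+X_3\in\{0,1,2,3\}$ over the integers. Then every admissible rate tuple $(R_{31},R_{32},R_1,R_2)$ satisfies $R_1\ge1$, $R_2\ge1$, and $$\frac{R_1+R_2}{2}\ \ge\ \frac{0.5+3-0.75\log_2 3}{2}\approx\frac{2.31128}{2}.$$
   Context: A source-network code $\mathcal{C}_{f,k}$ consists of encoders $\phi_{(s_3,s_1)},\phi_{(s_3,s_2)}:\mathcal{A}^k\to\mathcal{Z}^*$, $\phi_{(s_1,t)},\phi_{(s_2,t)}:\mathcal{A}^k\times\mathcal{Z}^*\to\mathcal{Z}^*$ ($\mathcal{Z}^*$ = finite binary sequences) and a decoder $\psi_t:\mathcal{Z}^*\times\mathcal{Z}^*\to\{0,1,2,3\}^k$; $\mathbf{Z}_{31}=\phi_{(s_3,s_1)}(X_3^k)$, $\mathbf{Z}_{32}=\phi_{(s_3,s_2)}(X_3^k)$, $\mathbf{Z}_1=\phi_{(s_1,t)}(X_1^k,\mathbf{Z}_{31})$, $\mathbf{Z}_2=\phi_{(s_2,t)}(X_2^k,\mathbf{Z}_{32})$, and $\Pr\{\psi_t(\mathbf{Z}_1,\mathbf{Z}_2)\ne f(X_1^k,X_2^k,X_3^k)\}=0$,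 with $f$ applied componentwise. A tuple $(R_{31},R_{32},R_1,R_2)$ is admissible if for every $\epsilon>0$ there exist a sufficiently large $k$ and such a code with $\log|\mathcal{Z}|\,\mathbb{E}\ell(\mathbf{Z}_e)\le k\log|\mathcal{A}|(R_e+\epsilon)$ for each $e\in\{31,32,1,2\}$, where $\ell$ denotes length in symbols of $\mathcal{Z}$. *)

theory Defs
  imports Complex_Main
begin

text \<open>Source alphabet A = Z = {0,1} is rendered as bool; finite sequences over Z
  (the set Z^*) as bool list; a message block X^k as a bool list of length k.\<close>

definition msgs :: "nat \<Rightarrow> bool list set" where
  "msgs k = {xs. length xs = k}"

text \<open>All message triples (X_1^k, X_2^k, X_3^k); since the components are i.i.d. uniform,
  the joint distribution is uniform on this finite set.\<close>
definition triples :: "nat \<Rightarrow> (bool list \<times> bool list \<times> bool list) set" where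
  "triples k = msgs k \<times> msgs k \<times> msgs k"

definition sum_demand :: "bool list \<Rightarrow> bool list \<Rightarrow> bool list \<Rightarrow> nat list" where
  "sum_demand x1 x2 x3 = map (\<lambda>(a, b, c). of_bool a + of_bool b + of_bool c) (zip x1 (zip x2 x3))"

definition prob_uniform :: "nat \<Rightarrow> (bool list \<times> bool list \<times> bool list \<Rightarrow> bool) \<Rightarrow> real" where
  "prob_uniform k P = real (card {x \<in> triples k. P x}) / real (card (triples k))"

definition expect_uniform :: "nat \<Rightarrow> (bool list \<times> bool list \<times> bool list \<Rightarrow> real) \<Rightarrow> real" where
  "expect_uniform k g = (\<Sum>x\<in>triples k. g x) / real (card (triples k))"

definition zero_error_code ::
  "nat \<Rightarrow> (bool list \<Rightarrow> bool list) \<Rightarrow> (bool list \<Rightarrow> bool list)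
   \<Rightarrow> (bool list \<Rightarrow> bool list \<Rightarrow> bool list) \<Rightarrow> (bool list \<Rightarrow> bool list \<Rightarrow> bool list)
   \<Rightarrow> (bool list \<Rightarrow> bool list \<Rightarrow> nat list) \<Rightarrow> bool" where
  "zero_error_code k e31 e32 e1 e2 dec \<longleftrightarrow>
     prob_uniform k (\<lambda>(x1, x2, x3). dec (e1 x1 (e31 x3)) (e2 x2 (e32 x3)) \<noteq> sum_demand x1 x2 x3) = 0"

text \<open>Admissibility; |A| = |Z| = 2, logs kept literally (natural log, base irrelevant).\<close>
definition admissible :: "real \<Rightarrow> real \<Rightarrow> real \<Rightarrow> real \<Rightarrow> bool" where
  "admissible R31 R32 R1 R2 \<longleftrightarrow>
    (\<forall>\<epsilon>>0. \<forall>K. \<exists>k\<ge>K. \<exists>e31 e32 e1 e2 dec.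
       zero_error_code k e31 e32 e1 e2 dec \<and>
       ln 2 * expect_uniform k (\<lambda>(x1, x2, x3). real (length (e31 x3))) \<le> real k * ln 2 * (R31 + \<epsilon>) \<and>
       ln 2 * expect_uniform k (\<lambda>(x1, x2, x3). real (length (e32 x3))) \<le> real k * ln 2 * (R32 + \<epsilon>) \<and>
       ln 2 * expect_uniform k (\<lambda>(x1, x2, x3). real (length (e1 x1 (e31 x3)))) \<le> real k * ln 2 * (R1 + \<epsilon>) \<and>
       ln 2 * expect_uniform k (\<lambda>(x1, x2, x3). real (length (e2 x2 (e32 x3)))) \<le> real k * ln 2 * (R2 + \<epsilon>))"

end

theory Submission
  imports Defs
begin


lemma msgs_finite: "finite (msgs k)"
proof -
  have "msgs k = {xs. set xs \<subseteq> (UNIV::bool set) \<and> length xs = k}" by (auto simp: msgs_def)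
  then show ?thesis using finite_lists_length_eq[of "UNIV::bool set" k] by simp
qed

lemma msgs_card: "card (msgs k) = 2 ^ k"
proof -
  have "msgs k = {xs. set xs \<subseteq> (UNIV::bool set) \<and> length xs = k}" by (auto simp: msgs_def)
  then show ?thesis using card_lists_length_eq[of "UNIV::bool set" k] by simp
qed

lemma msgs_Suc: "msgs (Suc k) = Cons True ` msgs k \<union> Cons False ` msgs k"
  by (auto simp: msgs_def length_Suc_conv image_iff)

lemma sum_msgs_Suc:
  "(\<Sum>xs\<in>msgs (Suc k). f xs) = (\<Sum>xs\<in>msgs k. f (True # xs)) + (\<Sum>xs\<in>msgs k. f (False # xs))"
  unfolding msgs_Suc
  by (subst sum.union_disjoint) (auto simp: msgs_finite sum.reindex)

lemma msgs_0: "msgs 0 = {[]}" by (auto simp: msgs_def)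

lemma triples_finite: "finite (triples k)" by (simp add: triples_def msgs_finite)
lemma triples_card: "card (triples k) = 8 ^ k"
  by (simp add: triples_def msgs_card card_cartesian_product power_mult_distrib[symmetric])

definition w :: "real \<Rightarrow> bool list \<Rightarrow> real" where
  "w a z = (1 - 2*a) * a ^ length z"

lemma sum_w_le:
  assumes "finite A" "0 < a" "a < 1/2"
  shows "(\<Sum>z\<in>A. w a z) \<le> 1"
proof -
  obtain M where M: "\<forall>z\<in>A. length z \<le> M"
    using finite_nat_set_iff_bounded_le[of "length ` A"] assms(1) by auto
  have eq: "{z::bool list. length z \<le> M} = (\<Union>n\<in>{..M}. msgs n)" by (auto simp: msgs_def)
  have fin: "finite {z::bool list. length z \<le> M}" unfolding eq by (auto simp: msgs_finite)
  have "(\<Sum>z\<in>A. w a z) \<le> (\<Sum>z\<in>{z::bool list. length z \<le> M}. w a z)"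
    by (rule sum_mono2[OF fin]) (use M assms in \<open>auto simp: w_def\<close>)
  also have "\<dots> = (\<Sum>n\<in>{..M}. \<Sum>z\<in>msgs n. w a z)"
    unfolding eq by (rule sum.UNION_disjoint) (auto simp: msgs_finite[unfolded msgs_def] msgs_def)
  also have "\<dots> = (\<Sum>n\<in>{..M}. (1 - 2*a) * (2*a)^n)"
    by (rule sum.cong) (auto simp: w_def msgs_def msgs_card[unfolded msgs_def] power_mult_distrib)
  also have "\<dots> = (1 - 2*a) * (\<Sum>n<Suc M. (2*a)^n)"
    by (simp add: sum_distrib_left lessThan_Suc_atMost)
  also have "\<dots> = 1 - (2*a)^Suc M"
    using assms by (simp only: sum_gp_strict) (auto simp: field_simps)
  also have "\<dots> \<le> 1" using assms by simp
  finally show ?thesis .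
qed

lemma gibbs:
  fixes Q :: "'a \<Rightarrow> real"
  assumes "finite T" "\<And>x. x \<in> T \<Longrightarrow> Q x > 0" "sum Q T \<le> 1"
  shows "real (card T) * ln (real (card T)) \<le> (\<Sum>x\<in>T. - ln (Q x))"
proof (cases "T = {}")
  case True then show ?thesis by simp
next
  case False
  let ?N = "real (card T)"
  have N: "?N > 0" using False assms(1) by (simp add: card_gt_0_iff)
  have "(\<Sum>x\<in>T. ln ?N + ln (Q x)) \<le> (\<Sum>x\<in>T. ?N * Q x - 1)"
  proof (rule sum_mono)
    fix x assume "x \<in> T"
    then have "ln (?N * Q x) \<le> ?N * Q x - 1" using N assms(2) by (intro ln_le_minus_one) simp
    then show "ln ?N + ln (Q x) \<le> ?N * Q x - 1" using N assms(2)[OF \<open>x\<in>T\<close>] by (simp add: ln_mult)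
  qed
  also have "\<dots> = ?N * sum Q T - ?N" by (simp add: sum_subtractf sum_distrib_left)
  also have "\<dots> \<le> 0" using N assms(3) by (simp add: mult_le_cancel_left1)
  finally show ?thesis by (simp add: sum.distrib sum_negf)
qed



lemma ze_correct:
  assumes "zero_error_code k e31 e32 e1 e2 dec" "x1 \<in> msgs k" "x2 \<in> msgs k" "x3 \<in> msgs k"
  shows "dec (e1 x1 (e31 x3)) (e2 x2 (e32 x3)) = sum_demand x1 x2 x3"
proof (rule ccontr)
  assume ne: "dec (e1 x1 (e31 x3)) (e2 x2 (e32 x3)) \<noteq> sum_demand x1 x2 x3"
  let ?S = "{x \<in> triples k. (\<lambda>(x1, x2, x3). dec (e1 x1 (e31 x3)) (e2 x2 (e32 x3)) \<noteq> sum_demand x1 x2 x3) x}"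
  have "(x1,x2,x3) \<in> ?S" using ne assms by (simp add: triples_def)
  moreover have "finite ?S" using triples_finite by simp
  ultimately have "card ?S > 0" by (auto simp: card_gt_0_iff)
  moreover have "card (triples k) > 0" by (simp add: triples_card)
  ultimately have "prob_uniform k (\<lambda>(x1, x2, x3). dec (e1 x1 (e31 x3)) (e2 x2 (e32 x3)) \<noteq> sum_demand x1 x2 x3) > 0"
    unfolding prob_uniform_def by simp
  then show False using assms(1) unfolding zero_error_code_def by simp
qed

lemma sum_demand_nth:
  "i < length x1 \<Longrightarrow> i < length x2 \<Longrightarrow> i < length x3 \<Longrightarrow>
   sum_demand x1 x2 x3 ! i = of_bool (x1!i) + of_bool (x2!i) + of_bool (x3!i)"
  by (simp add: sum_demand_def)

lemma sum_demand_length: "length (sum_demand x1 x2 x3) = min (length x1) (min (length x2) (length x3))"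
  by (simp add: sum_demand_def)

lemma sd_inj1:
  assumes "length x1 = k" "length y1 = k" "length x2 = k" "length x3 = k"
    "sum_demand x1 x2 x3 = sum_demand y1 x2 x3"
  shows "x1 = y1"
proof (rule nth_equalityI)
  show "length x1 = length y1" using assms by simp
  fix i assume "i < length x1"
  have "sum_demand x1 x2 x3 ! i = sum_demand y1 x2 x3 ! i" using assms by simp
  moreover have "sum_demand x1 x2 x3 ! i = of_bool (x1!i) + of_bool (x2!i) + of_bool (x3!i)"
    using assms \<open>i < length x1\<close> by (intro sum_demand_nth) auto
  moreover have "sum_demand y1 x2 x3 ! i = of_bool (y1!i) + of_bool (x2!i) + of_bool (x3!i)"
    using assms \<open>i < length x1\<close> by (intro sum_demand_nth) auto
  ultimately show "x1 ! i = y1 ! i" by (cases "x1!i"; cases "y1!i") auto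
qed

lemma sd_inj2:
  assumes "length x1 = k" "length y2 = k" "length x2 = k" "length x3 = k"
    "sum_demand x1 x2 x3 = sum_demand x1 y2 x3"
  shows "x2 = y2"
proof (rule nth_equalityI)
  show "length x2 = length y2" using assms by simp
  fix i assume "i < length x2"
  have "sum_demand x1 x2 x3 ! i = sum_demand x1 y2 x3 ! i" using assms by simp
  moreover have "sum_demand x1 x2 x3 ! i = of_bool (x1!i) + of_bool (x2!i) + of_bool (x3!i)"
    using assms \<open>i < length x2\<close> by (intro sum_demand_nth) auto
  moreover have "sum_demand x1 y2 x3 ! i = of_bool (x1!i) + of_bool (y2!i) + of_bool (x3!i)"
    using assms \<open>i < length x2\<close> by (intro sum_demand_nth) auto
  ultimately show "x2 ! i = y2 ! i" by (cases "x2!i"; cases "y2!i") auto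
qed

lemma ze_inj1:
  assumes "zero_error_code k e31 e32 e1 e2 dec" "x1 \<in> msgs k" "y1 \<in> msgs k" "x3 \<in> msgs k"
    "e1 x1 (e31 x3) = e1 y1 (e31 x3)"
  shows "x1 = y1"
proof -
  have x2: "x3 \<in> msgs k" by fact
  have "sum_demand x1 x3 x3 = sum_demand y1 x3 x3"
    using ze_correct[OF assms(1) assms(2) x2 x2] ze_correct[OF assms(1) assms(3) x2 x2] assms(5) by simp
  then show ?thesis using assms by (intro sd_inj1[of x1 k y1 x3 x3]) (auto simp: msgs_def)
qed

lemma ze_inj2:
  assumes "zero_error_code k e31 e32 e1 e2 dec" "x2 \<in> msgs k" "y2 \<in> msgs k" "x3 \<in> msgs k"
    "e2 x2 (e32 x3) = e2 y2 (e32 x3)"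
  shows "x2 = y2"
proof -
  have x2: "x3 \<in> msgs k" by fact
  have "sum_demand x3 x2 x3 = sum_demand x3 y2 x3"
    using ze_correct[OF assms(1) x2 assms(2) x2] ze_correct[OF assms(1) x2 assms(3) x2] assms(5) by simp
  then show ?thesis using assms by (intro sd_inj2[of x3 k y2 x2 x3]) (auto simp: msgs_def)
qed

definition rho :: "bool \<Rightarrow> nat \<Rightarrow> real" where
  "rho c s = (if s = 0 then (if c then 0 else 1) else if s = 1 then (if c then 1/3 else 2/3)
     else if s = 2 then (if c then 2/3 else 1/3) else if s = 3 then (if c then 1 else 0) else 0)"

fun rr :: "bool list \<Rightarrow> nat list \<Rightarrow> real" where
  "rr [] _ = 1"
| "rr (c#cs) [] = 0"
| "rr (c#cs) (s#ss) = rho c s * rr cs ss"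

definition phi :: "bool \<Rightarrow> bool \<Rightarrow> bool \<Rightarrow> real" where
  "phi a b c = ln (rho c (of_bool a + of_bool b + of_bool c))"

fun phisum :: "bool list \<Rightarrow> bool list \<Rightarrow> bool list \<Rightarrow> real" where
  "phisum (a#as) (b#bs) (c#cs) = phi a b c + phisum as bs cs"
| "phisum _ _ _ = 0"

lemma rho_nonneg: "rho c s \<ge> 0" by (simp add: rho_def)
lemma rho_sum: "rho True s + rho False s \<le> 1" by (simp add: rho_def)

lemma rr_nonneg: "rr cs ss \<ge> 0"
  by (induction cs ss rule: rr.induct) (auto simp: rho_nonneg)

lemma sum_rr: "(\<Sum>v\<in>msgs k. rr v s) \<le> 1"
proof (induction k arbitrary: s)
  case 0 then show ?case by (simp add: msgs_0)
next
  case (Suc k)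
  show ?case
  proof (cases s)
    case Nil then show ?thesis by (simp add: sum_msgs_Suc)
  next
    case (Cons s0 ss)
    have "(\<Sum>v\<in>msgs (Suc k). rr v s) = (rho True s0 + rho False s0) * (\<Sum>v\<in>msgs k. rr v ss)"
      by (simp add: sum_msgs_Suc Cons sum_distrib_left distrib_right sum.distrib)
    also have "\<dots> \<le> 1 * 1"
      by (rule mult_mono) (auto simp: rho_sum Suc rho_nonneg sum_nonneg rr_nonneg add_nonneg_nonneg)
    finally show ?thesis by simp
  qed
qed

lemma rho_pos: "rho c (of_bool a + of_bool b + of_bool c) > 0"
  by (cases a; cases b; cases c) (simp_all add: rho_def)

lemma rr_phisum:
  "length x1 = length x3 \<Longrightarrow> length x2 = length x3 \<Longrightarrow>
   rr x3 (sum_demand x1 x2 x3) = exp (phisum x1 x2 x3)"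
proof (induction x3 arbitrary: x1 x2)
  case Nil then show ?case by simp
next
  case (Cons c cs)
  then obtain a as b bs where x1: "x1 = a#as" and x2: "x2 = b#bs"
    by (metis length_Suc_conv)
  have "rr (c#cs) (sum_demand x1 x2 (c#cs)) = rho c (of_bool a + of_bool b + of_bool c) * rr cs (sum_demand as bs cs)"
    by (simp add: x1 x2 sum_demand_def)
  also have "\<dots> = exp (phi a b c) * exp (phisum as bs cs)"
    using Cons by (simp add: phi_def rho_pos x1 x2)
  finally show ?case by (simp add: x1 x2 exp_add)
qed

definition S3 :: "nat \<Rightarrow> (bool list \<Rightarrow> bool list \<Rightarrow> bool list \<Rightarrow> real) \<Rightarrow> real" where
  "S3 k g = (\<Sum>x1\<in>msgs k. \<Sum>x2\<in>msgs k. \<Sum>x3\<in>msgs k. g x1 x2 x3)"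

definition sig :: real where
  "sig = (\<Sum>a\<in>UNIV. \<Sum>b\<in>UNIV. \<Sum>c\<in>UNIV. phi a b c)"

lemma eight: "(8::real)^k = 2^k*(2^k*2^k)" by (simp add: power_mult_distrib[symmetric])

lemma S3_const: "S3 k (\<lambda>x1 x2 x3. p + h x1 x2 x3) = 8^k * p + S3 k h"
  by (simp add: S3_def sum.distrib msgs_card eight)

lemma S3_phisum: "8 * S3 k phisum = real k * 8^k * sig"
proof (induction k)
  case 0 then show ?case by (simp add: S3_def msgs_0)
next
  case (Suc k)
  have "S3 (Suc k) phisum = 8 * 8^k * (sig / 8) + 8 * S3 k phisum"
    by (simp add: S3_def sum_msgs_Suc sum.distrib msgs_card sig_def UNIV_bool eight algebra_simps)
  then show ?case using Suc by (simp add: algebra_simps)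
qed

lemma sig_val: "sig / 8 = ln 2 / 2 - 3/4 * ln 3"
  by (simp add: sig_def UNIV_bool phi_def rho_def ln_div)



lemma w_pos: "0 < a \<Longrightarrow> a < 1/2 \<Longrightarrow> w a z > 0"
  by (simp add: w_def)

lemma ln_w: "0 < a \<Longrightarrow> a < 1/2 \<Longrightarrow> ln (w a z) = ln (1 - 2*a) + real (length z) * ln a"
  by (simp add: w_def ln_mult ln_realpow)

lemma ln4: "ln (4::real) = 2 * ln 2"
proof -
  have "ln (4::real) = ln (2^2)" by simp
  then show ?thesis by (simp only: ln_realpow)
qed

lemma NlnN: "real (card (triples k)) * ln (real (card (triples k))) = real (card (triples k)) * (3 * real k * ln 2)"
proof -
  have "ln (real (card (triples k))) = 3 * real k * ln 2"
  proof -
    have "ln (8::real) = ln (2^3)" by simp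
    then have "ln (8::real) = 3 * ln 2" by (simp only: ln_realpow)
    then show ?thesis by (simp add: triples_card ln_realpow)
  qed
  then show ?thesis by simp
qed

lemma core1:
  assumes ze: "zero_error_code k e31 e32 e1 e2 dec" and a: "0 < a" "a < 1/2"
  shows "real (card (triples k)) * (real k * ln 2 + ln (1 - 2*a))
     \<le> - ln a * (\<Sum>x\<in>triples k. (\<lambda>(x1, x2, x3). real (length (e1 x1 (e31 x3)))) x)"
proof -
  let ?T = "triples k"
  define Q where "Q = (\<lambda>(x1::bool list, x2::bool list, x3::bool list). w a (e1 x1 (e31 x3)) * (1/4)^k)"
  define g where "g = (\<lambda>(x1::bool list, x2::bool list, x3::bool list). (e1 x1 (e31 x3), x2, x3))"
  define P where "P = (\<lambda>(z::bool list, u::bool list, v::bool list). w a z * (1/4::real)^k)"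
  define Z where "Z = (\<lambda>(x1::bool list, x2::bool list, x3::bool list). e1 x1 (e31 x3)) ` ?T"
  have inj: "inj_on g ?T"
    unfolding g_def inj_on_def triples_def using ze_inj1[OF ze] by auto
  have QP: "Q = P \<circ> g" by (auto simp: Q_def P_def g_def)
  have sub: "g ` ?T \<subseteq> Z \<times> msgs k \<times> msgs k"
  proof
    fix y assume "y \<in> g ` ?T"
    then obtain x1 x2 x3 where "(x1,x2,x3) \<in> ?T" "y = g (x1,x2,x3)" by auto
    then show "y \<in> Z \<times> msgs k \<times> msgs k" unfolding Z_def g_def
      by (auto simp: triples_def intro!: image_eqI[where x="(x1,x2,x3)"])
  qed
  have finZ: "finite Z" using triples_finite by (simp add: Z_def)
  have "sum Q ?T = sum P (g ` ?T)" by (simp add: QP sum.reindex[OF inj])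
  also have "\<dots> \<le> sum P (Z \<times> msgs k \<times> msgs k)"
    by (rule sum_mono2) (use finZ msgs_finite sub a in \<open>auto simp: P_def w_pos less_imp_le\<close>)
  also have "\<dots> = (\<Sum>z\<in>Z. w a z) * (2^k * 2^k * (1/4)^k)"
    by (simp add: P_def sum.cartesian_product[symmetric] msgs_card sum_distrib_right card_cartesian_product algebra_simps)
  also have "(2::real)^k * 2^k * (1/4)^k = 1" by (simp add: power_mult_distrib[symmetric])
  also have "(\<Sum>z\<in>Z. w a z) * 1 \<le> 1" using sum_w_le[OF finZ a] by simp
  finally have sQ: "sum Q ?T \<le> 1" .
  have Qpos: "\<And>x. x \<in> ?T \<Longrightarrow> Q x > 0" using a by (auto simp: Q_def w_pos)
  have G: "real (card ?T) * ln (real (card ?T)) \<le> (\<Sum>x\<in>?T. - ln (Q x))"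
    by (rule gibbs[OF triples_finite Qpos sQ])
  have "(\<Sum>x\<in>?T. - ln (Q x)) = (\<Sum>x\<in>?T. real k * (2 * ln 2) - ln (1 - 2*a)
        + (- ln a) * (\<lambda>(x1, x2, x3). real (length (e1 x1 (e31 x3)))) x)"
  proof (rule sum.cong)
    fix x assume "x \<in> ?T"
    obtain x1 x2 x3 where x: "x = (x1,x2,x3)" by (cases x)
    have "ln ((1/4::real)^k) = - (real k * (2 * ln 2))"
      by (simp add: ln_realpow ln_div ln4)
    then show "- ln (Q x) = real k * (2 * ln 2) - ln (1 - 2*a)
        + (- ln a) * (\<lambda>(x1, x2, x3). real (length (e1 x1 (e31 x3)))) x"
      using a w_pos[OF a, of "e1 x1 (e31 x3)"] by (simp add: x Q_def ln_mult ln_w)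
  qed simp
  also have "\<dots> = real (card ?T) * (real k * (2 * ln 2) - ln (1 - 2*a))
       + (- ln a) * (\<Sum>x\<in>?T. (\<lambda>(x1, x2, x3). real (length (e1 x1 (e31 x3)))) x)"
    by (simp only: sum.distrib sum_constant flip: sum_distrib_left)
  finally show ?thesis using G NlnN[of k] by (simp add: algebra_simps)
qed

lemma core2:
  assumes ze: "zero_error_code k e31 e32 e1 e2 dec" and a: "0 < a" "a < 1/2"
  shows "real (card (triples k)) * (real k * ln 2 + ln (1 - 2*a))
     \<le> - ln a * (\<Sum>x\<in>triples k. (\<lambda>(x1, x2, x3). real (length (e2 x2 (e32 x3)))) x)"
proof -
  let ?T = "triples k"
  define Q where "Q = (\<lambda>(x1::bool list, x2::bool list, x3::bool list). w a (e2 x2 (e32 x3)) * (1/4)^k)"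
  define g where "g = (\<lambda>(x1::bool list, x2::bool list, x3::bool list). (x1, e2 x2 (e32 x3), x3))"
  define P where "P = (\<lambda>(u::bool list, z::bool list, v::bool list). w a z * (1/4::real)^k)"
  define Z where "Z = (\<lambda>(x1::bool list, x2::bool list, x3::bool list). e2 x2 (e32 x3)) ` ?T"
  have inj: "inj_on g ?T"
    unfolding g_def inj_on_def triples_def using ze_inj2[OF ze] by auto
  have QP: "Q = P \<circ> g" by (auto simp: Q_def P_def g_def)
  have sub: "g ` ?T \<subseteq> msgs k \<times> Z \<times> msgs k"
  proof
    fix y assume "y \<in> g ` ?T"
    then obtain x1 x2 x3 where "(x1,x2,x3) \<in> ?T" "y = g (x1,x2,x3)" by auto
    then show "y \<in> msgs k \<times> Z \<times> msgs k" unfolding Z_def g_def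
      by (auto simp: triples_def intro!: image_eqI[where x="(x1,x2,x3)"])
  qed
  have finZ: "finite Z" using triples_finite by (simp add: Z_def)
  have "sum Q ?T = sum P (g ` ?T)" by (simp add: QP sum.reindex[OF inj])
  also have "\<dots> \<le> sum P (msgs k \<times> Z \<times> msgs k)"
    by (rule sum_mono2) (use finZ msgs_finite sub a in \<open>auto simp: P_def w_pos less_imp_le\<close>)
  also have "\<dots> = (\<Sum>z\<in>Z. w a z) * (2^k * 2^k * (1/4)^k)"
    by (simp add: P_def sum.cartesian_product[symmetric] msgs_card sum_distrib_right card_cartesian_product algebra_simps sum_distrib_left)
  also have "(2::real)^k * 2^k * (1/4)^k = 1" by (simp add: power_mult_distrib[symmetric])
  also have "(\<Sum>z\<in>Z. w a z) * 1 \<le> 1" using sum_w_le[OF finZ a] by simp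
  finally have sQ: "sum Q ?T \<le> 1" .
  have Qpos: "\<And>x. x \<in> ?T \<Longrightarrow> Q x > 0" using a by (auto simp: Q_def w_pos)
  have G: "real (card ?T) * ln (real (card ?T)) \<le> (\<Sum>x\<in>?T. - ln (Q x))"
    by (rule gibbs[OF triples_finite Qpos sQ])
  have "(\<Sum>x\<in>?T. - ln (Q x)) = (\<Sum>x\<in>?T. real k * (2 * ln 2) - ln (1 - 2*a)
        + (- ln a) * (\<lambda>(x1, x2, x3). real (length (e2 x2 (e32 x3)))) x)"
  proof (rule sum.cong)
    fix x assume "x \<in> ?T"
    obtain x1 x2 x3 where x: "x = (x1,x2,x3)" by (cases x)
    have "ln ((1/4::real)^k) = - (real k * (2 * ln 2))"
      by (simp add: ln_realpow ln_div ln4)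
    then show "- ln (Q x) = real k * (2 * ln 2) - ln (1 - 2*a)
        + (- ln a) * (\<lambda>(x1, x2, x3). real (length (e2 x2 (e32 x3)))) x"
      using a w_pos[OF a, of "e2 x2 (e32 x3)"] by (simp add: x Q_def ln_mult ln_w)
  qed simp
  also have "\<dots> = real (card ?T) * (real k * (2 * ln 2) - ln (1 - 2*a))
       + (- ln a) * (\<Sum>x\<in>?T. (\<lambda>(x1, x2, x3). real (length (e2 x2 (e32 x3)))) x)"
    by (simp only: sum.distrib sum_constant flip: sum_distrib_left)
  finally show ?thesis using G NlnN[of k] by (simp add: algebra_simps)
qed


lemma sum_phisum: "(\<Sum>x\<in>triples k. (\<lambda>(x1, x2, x3). phisum x1 x2 x3) x)
   = real (card (triples k)) * (real k * (ln 2 / 2 - 3/4 * ln 3))"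
proof -
  have "(\<Sum>x\<in>triples k. (\<lambda>(x1, x2, x3). phisum x1 x2 x3) x) = S3 k phisum"
    by (simp add: S3_def triples_def sum.cartesian_product)
  also have "\<dots> = real k * 8^k * (sig / 8)" using S3_phisum[of k] by simp
  finally show ?thesis by (simp add: sig_val triples_card)
qed

lemma core3:
  assumes ze: "zero_error_code k e31 e32 e1 e2 dec" and a: "0 < a" "a < 1/2"
  shows "real (card (triples k)) * (real k * (7/2 * ln 2 - 3/4 * ln 3) + 2 * ln (1 - 2*a))
     \<le> - ln a * ((\<Sum>x\<in>triples k. (\<lambda>(x1, x2, x3). real (length (e1 x1 (e31 x3)))) x)
          + (\<Sum>x\<in>triples k. (\<lambda>(x1, x2, x3). real (length (e2 x2 (e32 x3)))) x))"
proof -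
  let ?T = "triples k"
  define Q where "Q = (\<lambda>(x1::bool list, x2::bool list, x3::bool list).
      w a (e1 x1 (e31 x3)) * w a (e2 x2 (e32 x3)) * rr x3 (sum_demand x1 x2 x3))"
  define g where "g = (\<lambda>(x1::bool list, x2::bool list, x3::bool list). (e1 x1 (e31 x3), e2 x2 (e32 x3), x3))"
  define P where "P = (\<lambda>(z1::bool list, z2::bool list, v::bool list). w a z1 * w a z2 * rr v (dec z1 z2))"
  define Z1 where "Z1 = (\<lambda>(x1::bool list, x2::bool list, x3::bool list). e1 x1 (e31 x3)) ` ?T"
  define Z2 where "Z2 = (\<lambda>(x1::bool list, x2::bool list, x3::bool list). e2 x2 (e32 x3)) ` ?T"
  have inj: "inj_on g ?T"
    unfolding g_def inj_on_def triples_def using ze_inj1[OF ze] ze_inj2[OF ze] by auto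
  have QP: "\<And>x. x \<in> ?T \<Longrightarrow> Q x = (P \<circ> g) x"
    by (auto simp: Q_def P_def g_def triples_def ze_correct[OF ze])
  have sub: "g ` ?T \<subseteq> Z1 \<times> Z2 \<times> msgs k"
  proof
    fix y assume "y \<in> g ` ?T"
    then obtain x1 x2 x3 where "(x1,x2,x3) \<in> ?T" "y = g (x1,x2,x3)" by auto
    then show "y \<in> Z1 \<times> Z2 \<times> msgs k" unfolding Z1_def Z2_def g_def
      by (auto simp: triples_def intro!: image_eqI[where x="(x1,x2,x3)"])
  qed
  have finZ1: "finite Z1" using triples_finite by (simp add: Z1_def)
  have finZ2: "finite Z2" using triples_finite by (simp add: Z2_def)
  have "sum Q ?T = sum (P \<circ> g) ?T" using QP by (rule sum.cong[OF refl])
  also have "\<dots> = sum P (g ` ?T)" by (simp add: sum.reindex[OF inj])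
  also have "\<dots> \<le> sum P (Z1 \<times> Z2 \<times> msgs k)"
    by (rule sum_mono2) (use finZ1 finZ2 msgs_finite sub a in \<open>auto simp: P_def w_pos less_imp_le rr_nonneg\<close>)
  also have "\<dots> = (\<Sum>z1\<in>Z1. \<Sum>z2\<in>Z2. w a z1 * w a z2 * (\<Sum>v\<in>msgs k. rr v (dec z1 z2)))"
    by (simp add: P_def sum.cartesian_product[symmetric] sum_distrib_left)
  also have "\<dots> \<le> (\<Sum>z1\<in>Z1. \<Sum>z2\<in>Z2. w a z1 * w a z2 * 1)"
    by (intro sum_mono mult_left_mono sum_rr) (use a in \<open>auto simp: w_pos less_imp_le\<close>)
  also have "\<dots> = (\<Sum>z1\<in>Z1. w a z1) * (\<Sum>z2\<in>Z2. w a z2)"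
    by (simp add: sum_product)
  also have "\<dots> \<le> 1 * 1"
    by (intro mult_mono sum_w_le finZ1 finZ2 a) (use a in \<open>auto simp: w_pos less_imp_le sum_nonneg\<close>)
  finally have sQ: "sum Q ?T \<le> 1" by simp
  have Qpos: "\<And>x. x \<in> ?T \<Longrightarrow> Q x > 0"
    using a by (auto simp: Q_def w_pos triples_def msgs_def rr_phisum)
  have G: "real (card ?T) * ln (real (card ?T)) \<le> (\<Sum>x\<in>?T. - ln (Q x))"
    by (rule gibbs[OF triples_finite Qpos sQ])
  have "(\<Sum>x\<in>?T. - ln (Q x)) = (\<Sum>x\<in>?T. - 2 * ln (1 - 2*a)
        + (- ln a) * (\<lambda>(x1, x2, x3). real (length (e1 x1 (e31 x3)))) x
        + (- ln a) * (\<lambda>(x1, x2, x3). real (length (e2 x2 (e32 x3)))) x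
        - (\<lambda>(x1, x2, x3). phisum x1 x2 x3) x)"
  proof (rule sum.cong)
    fix x assume "x \<in> ?T"
    obtain x1 x2 x3 where x: "x = (x1,x2,x3)" by (cases x)
    have r: "rr x3 (sum_demand x1 x2 x3) = exp (phisum x1 x2 x3)"
      using \<open>x \<in> ?T\<close> by (intro rr_phisum) (auto simp: x triples_def msgs_def)
    show "- ln (Q x) = - 2 * ln (1 - 2*a)
        + (- ln a) * (\<lambda>(x1, x2, x3). real (length (e1 x1 (e31 x3)))) x
        + (- ln a) * (\<lambda>(x1, x2, x3). real (length (e2 x2 (e32 x3)))) x
        - (\<lambda>(x1, x2, x3). phisum x1 x2 x3) x"
      using a w_pos[OF a, of "e1 x1 (e31 x3)"] w_pos[OF a, of "e2 x2 (e32 x3)"]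
      by (simp add: x Q_def ln_mult ln_w r algebra_simps)
  qed simp
  also have "\<dots> = real (card ?T) * (- 2 * ln (1 - 2*a))
       + (- ln a) * (\<Sum>x\<in>?T. (\<lambda>(x1, x2, x3). real (length (e1 x1 (e31 x3)))) x)
       + (- ln a) * (\<Sum>x\<in>?T. (\<lambda>(x1, x2, x3). real (length (e2 x2 (e32 x3)))) x)
       - (\<Sum>x\<in>?T. (\<lambda>(x1, x2, x3). phisum x1 x2 x3) x)"
    by (simp only: sum.distrib sum_subtractf sum_constant flip: sum_distrib_left)
  finally show ?thesis using G NlnN[of k] sum_phisum[of k] by (simp add: algebra_simps)
qed



lemma limit_arg:
  fixes R B m :: real
  assumes B: "B > 0" and m: "m \<ge> 0"
    and H: "\<And>\<epsilon> K. \<epsilon> > 0 \<Longrightarrow> \<exists>k::nat \<ge> K. \<forall>a. 0 < a \<and> a < 1/2 \<longrightarrow>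
        real k * B * ln 2 + m * ln (1 - 2*a) \<le> - ln a * (real k * (R + \<epsilon>))"
  shows "R \<ge> B"
proof (rule ccontr)
  assume "\<not> R \<ge> B"
  define d where "d = B - R"
  have d: "d > 0" using \<open>\<not> R \<ge> B\<close> by (simp add: d_def)
  define t where "t = R + d/4"
  define lam where "lam = 1 + d / (4*B)"
  have lam1: "lam > 1" using d B by (simp add: lam_def)
  have lamt: "lam * t \<le> B - d/2"
  proof (cases "t \<le> 0")
    case True
    then have "lam * t \<le> 1 * t" using lam1 by (intro mult_right_mono_neg) auto
    moreover have "t \<le> B - d/2" using d unfolding t_def d_def by (simp add: field_simps)
    ultimately show ?thesis by simp
  next
    case False
    have "t * (d / (4*B)) \<le> B * (d / (4*B))"
      using False d B by (intro mult_right_mono) (auto simp: t_def d_def field_simps)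
    also have "\<dots> = d/4" using B by simp
    finally have "lam * t \<le> t + d/4" by (simp add: lam_def algebra_simps)
    moreover have "t + d/4 = B - d/2" by (simp add: t_def d_def field_simps)
    ultimately show ?thesis by simp
  qed
  define a where "a = 2 powr (- lam)"
  have a0: "a > 0" by (simp add: a_def)
  have "a < 2 powr (-1)" unfolding a_def using lam1 by (intro powr_less_mono) auto
  then have a1: "a < 1/2" by (simp add: powr_minus)
  have lna: "- ln a = lam * ln 2" by (simp add: a_def)
  define c where "c = 1 - 2*a"
  have c0: "c > 0" "c < 1" using a0 a1 by (auto simp: c_def)
  then have lnc: "ln c < 0" by simp
  define K where "K = nat \<lceil>- 2 * m * ln c / (d * ln 2)\<rceil> + 1"
  obtain k where k: "k \<ge> K" and ineq: "\<forall>a. 0 < a \<and> a < 1/2 \<longrightarrow>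
        real k * B * ln 2 + m * ln (1 - 2*a) \<le> - ln a * (real k * (R + d/4))"
    using H[of "d/4" K] d by auto
  have "real k * B * ln 2 + m * ln c \<le> lam * ln 2 * (real k * t)"
    using ineq a0 a1 unfolding c_def t_def lna[symmetric] by simp
  also have "\<dots> = (real k * ln 2) * (lam * t)" by (simp add: algebra_simps)
  also have "\<dots> \<le> (real k * ln 2) * (B - d/2)" by (intro mult_left_mono lamt) auto
  finally have "m * ln c \<le> - real k * ln 2 * d / 2" by (simp add: algebra_simps)
  moreover have "real k > - 2 * m * ln c / (d * ln 2)"
  proof -
    have "real K > - 2 * m * ln c / (d * ln 2)" unfolding K_def by linarith
    then show ?thesis using k by linarith
  qed
  then have "real k * (d * ln 2) > - 2 * m * ln c" using d by (simp add: field_simps)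
  ultimately show False by (simp add: algebra_simps)
qed

lemma exp_bound:
  assumes "ln 2 * expect_uniform k g \<le> real k * ln 2 * (R + \<epsilon>)"
  shows "(\<Sum>x\<in>triples k. g x) \<le> real (card (triples k)) * (real k * (R + \<epsilon>))"
proof -
  have N: "real (card (triples k)) > 0" by (simp add: triples_card)
  have "expect_uniform k g \<le> real k * (R + \<epsilon>)" using assms by simp
  then show ?thesis using N unfolding expect_uniform_def by (simp add: field_simps)
qed

theorem mainTheorem5:
  assumes "admissible R31 R32 R1 R2"
  shows "R1 \<ge> 1 \<and> R2 \<ge> 1 \<and> (R1 + R2) / 2 \<ge> (0.5 + 3 - 0.75 * log 2 3) / 2"
proof -
  let ?N = "\<lambda>k. real (card (triples k))"
  have Npos: "\<And>k. ?N k > 0" by (simp add: triples_card)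
  have r1: "R1 \<ge> 1"
  proof (rule limit_arg[where m=1])
    fix \<epsilon> :: real and K :: nat assume e: "\<epsilon> > 0"
    obtain k e31 e32 e1 e2 dec where k: "k \<ge> K" and ze: "zero_error_code k e31 e32 e1 e2 dec"
      and b: "ln 2 * expect_uniform k (\<lambda>(x1, x2, x3). real (length (e1 x1 (e31 x3)))) \<le> real k * ln 2 * (R1 + \<epsilon>)"
      using assms e unfolding admissible_def by blast
    show "\<exists>k::nat \<ge> K. \<forall>a. 0 < a \<and> a < 1/2 \<longrightarrow>
        real k * 1 * ln 2 + 1 * ln (1 - 2*a) \<le> - ln a * (real k * (R1 + \<epsilon>))"
    proof (intro exI[of _ k] conjI allI impI k)
      fix a :: real assume a: "0 < a \<and> a < 1/2"
      then have la: "- ln a > 0" by simp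
      have "?N k * (real k * ln 2 + ln (1 - 2*a)) \<le> - ln a * (\<Sum>x\<in>triples k. (\<lambda>(x1, x2, x3). real (length (e1 x1 (e31 x3)))) x)"
        using core1[OF ze] a by auto
      also have "\<dots> \<le> - ln a * (?N k * (real k * (R1 + \<epsilon>)))"
        by (intro mult_left_mono exp_bound b) (use la in auto)
      also have "\<dots> = ?N k * (- ln a * (real k * (R1 + \<epsilon>)))" by (simp only: mult_ac)
      finally show "real k * 1 * ln 2 + 1 * ln (1 - 2*a) \<le> - ln a * (real k * (R1 + \<epsilon>))"
        using Npos[of k] by (simp only: mult_le_cancel_left_pos mult_1_right mult_1_left)
    qed
  qed simp_all
  have r2: "R2 \<ge> 1"
  proof (rule limit_arg[where m=1])
    fix \<epsilon> :: real and K :: nat assume e: "\<epsilon> > 0"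
    obtain k e31 e32 e1 e2 dec where k: "k \<ge> K" and ze: "zero_error_code k e31 e32 e1 e2 dec"
      and b: "ln 2 * expect_uniform k (\<lambda>(x1, x2, x3). real (length (e2 x2 (e32 x3)))) \<le> real k * ln 2 * (R2 + \<epsilon>)"
      using assms e unfolding admissible_def by blast
    show "\<exists>k::nat \<ge> K. \<forall>a. 0 < a \<and> a < 1/2 \<longrightarrow>
        real k * 1 * ln 2 + 1 * ln (1 - 2*a) \<le> - ln a * (real k * (R2 + \<epsilon>))"
    proof (intro exI[of _ k] conjI allI impI k)
      fix a :: real assume a: "0 < a \<and> a < 1/2"
      then have la: "- ln a > 0" by simp
      have "?N k * (real k * ln 2 + ln (1 - 2*a)) \<le> - ln a * (\<Sum>x\<in>triples k. (\<lambda>(x1, x2, x3). real (length (e2 x2 (e32 x3)))) x)"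
        using core2[OF ze] a by auto
      also have "\<dots> \<le> - ln a * (?N k * (real k * (R2 + \<epsilon>)))"
        by (intro mult_left_mono exp_bound b) (use la in auto)
      also have "\<dots> = ?N k * (- ln a * (real k * (R2 + \<epsilon>)))" by (simp only: mult_ac)
      finally show "real k * 1 * ln 2 + 1 * ln (1 - 2*a) \<le> - ln a * (real k * (R2 + \<epsilon>))"
        using Npos[of k] by (simp only: mult_le_cancel_left_pos mult_1_right mult_1_left)
    qed
  qed simp_all
  define B :: real where "B = 7/2 - 3/4 * (ln 3 / ln 2)"
  have l3: "ln (3::real) < 2 * ln 2" 
  proof -
    have "ln (3::real) < ln 4" by simp
    then show ?thesis using ln4 by simp
  qed
  have l2: "ln (2::real) > 0" by simp
  have "ln 3 / ln 2 < (2::real)" using l3 l2 by (simp add: divide_less_eq)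
  then have B0: "B > 0" by (simp add: B_def)
  have BL: "B * ln 2 = 7/2 * ln 2 - 3/4 * ln 3" by (simp add: B_def field_simps)
  have r3: "R1 + R2 \<ge> B"
  proof (rule limit_arg[where m=2, OF B0])
    fix \<epsilon> :: real and K :: nat assume e: "\<epsilon> > 0"
    obtain k e31 e32 e1 e2 dec where k: "k \<ge> K" and ze: "zero_error_code k e31 e32 e1 e2 dec"
      and b1: "ln 2 * expect_uniform k (\<lambda>(x1, x2, x3). real (length (e1 x1 (e31 x3)))) \<le> real k * ln 2 * (R1 + \<epsilon>/2)"
      and b2: "ln 2 * expect_uniform k (\<lambda>(x1, x2, x3). real (length (e2 x2 (e32 x3)))) \<le> real k * ln 2 * (R2 + \<epsilon>/2)"
      using assms e unfolding admissible_def by (meson half_gt_zero)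
    show "\<exists>k::nat \<ge> K. \<forall>a. 0 < a \<and> a < 1/2 \<longrightarrow>
        real k * B * ln 2 + 2 * ln (1 - 2*a) \<le> - ln a * (real k * (R1 + R2 + \<epsilon>))"
    proof (intro exI[of _ k] conjI allI impI k)
      fix a :: real assume a: "0 < a \<and> a < 1/2"
      then have la: "- ln a > 0" by simp
      have "?N k * (real k * (7/2 * ln 2 - 3/4 * ln 3) + 2 * ln (1 - 2*a)) \<le> - ln a *
           ((\<Sum>x\<in>triples k. (\<lambda>(x1, x2, x3). real (length (e1 x1 (e31 x3)))) x)
          + (\<Sum>x\<in>triples k. (\<lambda>(x1, x2, x3). real (length (e2 x2 (e32 x3)))) x))"
        using core3[OF ze] a by auto
      also have "\<dots> \<le> - ln a * (?N k * (real k * (R1 + \<epsilon>/2)) + ?N k * (real k * (R2 + \<epsilon>/2)))"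
        by (intro mult_left_mono add_mono exp_bound b1 b2) (use la in auto)
      also have "\<dots> = ?N k * (- ln a * (real k * (R1 + R2 + \<epsilon>)))" by (simp add: algebra_simps)
      finally have "real k * (7/2 * ln 2 - 3/4 * ln 3) + 2 * ln (1 - 2*a) \<le> - ln a * (real k * (R1 + R2 + \<epsilon>))"
        using Npos[of k] by (simp only: mult_le_cancel_left_pos)
      then show "real k * B * ln 2 + 2 * ln (1 - 2*a) \<le> - ln a * (real k * (R1 + R2 + \<epsilon>))"
        by (simp add: mult.assoc BL)
    qed
  qed simp
  have "log 2 3 = ln 3 / ln 2" by (simp add: log_def)
  then show ?thesis using r1 r2 r3 by (simp add: B_def)
qed

end
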